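(* Let $\mathbb{U}_m\subset\mathbb{R}^m$ be a compact convex polytope and $\Delta=(\Delta_i)_{i\in I}$ a simplicial mesh of $\mathbb{R}^n\times\mathbb{U}_m$ such that (1) the family $D=(D_q)_{q\in\mathcal{Q}}$ of projections $p(\Delta_i)$ of the cells onto $\mathbb{R}^n$ is a simplicial mesh of $\mathbb{R}^n$, and (2) for all $i,j\in I$, either $p(\Delta_i)=p(\Delta_j)$ or the interiors of $p(\Delta_i)$ and $p(\Delta_j)$ are disjoint. For $q\in\mathcal{Q}$ let $\mathcal{K}(q)=\{i\in I : p(\Delta_i)=D_q\}$. Then for every $q\in\mathcal{Q}$, $$D_q\times\mathbb{U}_m=\bigcup_{q'\in\mathcal{K}(q)}\Delta_{q'}.$$
   Context: $p:\mathbb{R}^n\times\mathbb{R}^m\to\mathbb{R}^n$ denotes the orthogonal projection onto the state space $\mathbb{R}^n$. A simplicial mesh of a set $E\subset\mathbb{R}^k$ is a locally finite family of $k$-simplices covering $E$, any two of which intersect in a common face (possibly empty). *)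

theory Defs
  imports "HOL-Analysis.Analysis"
begin

definition simplicial_mesh :: "'i set \<Rightarrow> ('i \<Rightarrow> 'a::euclidean_space set) \<Rightarrow> 'a set \<Rightarrow> bool" where
  "simplicial_mesh I S E \<longleftrightarrow>
     (\<forall>i\<in>I. int DIM('a) simplex S i) \<and>
     (\<forall>x. \<exists>U. open U \<and> x \<in> U \<and> finite {i\<in>I. S i \<inter> U \<noteq> {}}) \<and>
     (\<Union>i\<in>I. S i) = E \<and>
     (\<forall>i\<in>I. \<forall>j\<in>I. (S i \<inter> S j) face_of S i \<and> (S i \<inter> S j) face_of S j)"

end

theory Submission
  imports Defs
begin
lemma simplex_full_int:
  fixes S :: "'a::euclidean_space set"
  assumes "int DIM('a) simplex S" shows "interior S \<noteq> {}"
proof -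
  have c: "convex S" using assms convex_simplex by blast
  have a: "aff_dim S = int DIM('a)" using assms aff_dim_simplex by blast
  then have "affine hull S = UNIV" using aff_dim_eq_full by blast
  then have "rel_interior S = interior S" using rel_interior_interior by blast
  moreover have "S \<noteq> {}"
  proof
    assume "S = {}" then have "aff_dim S = -1" by simp
    with a show False by simp
  qed
  ultimately show ?thesis using c rel_interior_eq_empty by blast
qed

lemma open_meets_closure:
  fixes S T :: "'a::topological_space set"
  shows "open S \<Longrightarrow> y \<in> S \<Longrightarrow> y \<in> closure T \<Longrightarrow> S \<inter> T \<noteq> {}"
  using open_Int_closure_eq_empty by auto

lemma closed_locfin_union:
  fixes A :: "'i \<Rightarrow> 'a::topological_space set"
  assumes "\<forall>i\<in>J. closed (A i)" "J \<subseteq> I"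
    "\<forall>x. \<exists>V. open V \<and> x \<in> V \<and> finite {i\<in>I. A i \<inter> V \<noteq> {}}"
  shows "closed (\<Union>i\<in>J. A i)"
  unfolding closed_def
proof (subst open_subopen, intro ballI)
  fix x assume x: "x \<in> - (\<Union>i\<in>J. A i)"
  obtain V where V: "open V" "x \<in> V" "finite {i\<in>I. A i \<inter> V \<noteq> {}}" using assms(3) by blast
  let ?F = "{i\<in>I. A i \<inter> V \<noteq> {}} \<inter> J"
  have "finite ?F" using V(3) by blast
  then have "closed (\<Union>i\<in>?F. A i)" using assms(1) by auto
  then have o: "open (V - (\<Union>i\<in>?F. A i))" using V(1) by auto
  have "x \<in> V - (\<Union>i\<in>?F. A i)" using x V(2) by auto
  moreover have "V - (\<Union>i\<in>?F. A i) \<subseteq> - (\<Union>i\<in>J. A i)" using assms(2) by auto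
  ultimately show "\<exists>T. open T \<and> x \<in> T \<and> T \<subseteq> - (\<Union>i\<in>J. A i)" using o by blast
qed

theorem lemma3:
  fixes U :: "'m::euclidean_space set"
    and I :: "'i set"
    and \<Delta> :: "'i \<Rightarrow> ('n::euclidean_space \<times> 'm) set"
  assumes "polytope U"
    and "simplicial_mesh I \<Delta> (UNIV \<times> U)"
    and "simplicial_mesh ((\<lambda>i. fst ` \<Delta> i) ` I) (\<lambda>D. D) (UNIV :: 'n set)"
    and "\<forall>i\<in>I. \<forall>j\<in>I. fst ` \<Delta> i = fst ` \<Delta> j \<or>
                         interior (fst ` \<Delta> i) \<inter> interior (fst ` \<Delta> j) = {}"
  shows "\<forall>q\<in>(\<lambda>i. fst ` \<Delta> i) ` I. q \<times> U = (\<Union>i\<in>{i\<in>I. fst ` \<Delta> i = q}. \<Delta> i)"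
proof
  fix q assume "q \<in> (\<lambda>i. fst ` \<Delta> i) ` I"
  then obtain i0 where i0: "i0 \<in> I" "q = fst ` \<Delta> i0" by blast
  have m1: "\<forall>i\<in>I. int DIM('n \<times> 'm) simplex \<Delta> i"
    "\<forall>x. \<exists>V. open V \<and> x \<in> V \<and> finite {i\<in>I. \<Delta> i \<inter> V \<noteq> {}}"
    "(\<Union>i\<in>I. \<Delta> i) = UNIV \<times> U"
    using assms(2) unfolding simplicial_mesh_def by blast+
  have m2: "\<forall>i\<in>I. int DIM('n) simplex (fst ` \<Delta> i)"
    using assms(3) unfolding simplicial_mesh_def by blast
  have cl: "\<forall>i\<in>I. closed (\<Delta> i)" using m1(1) closed_simplex by blast
  have pc: "\<forall>i\<in>I. convex (fst ` \<Delta> i) \<and> interior (fst ` \<Delta> i) \<noteq> {} \<and> closed (fst ` \<Delta> i)"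
    using m2 convex_simplex simplex_full_int closed_simplex by blast
  let ?K = "{i\<in>I. fst ` \<Delta> i = q}"
  let ?W = "\<Union>i\<in>?K. \<Delta> i"
  show "q \<times> U = ?W"
  proof
    show "?W \<subseteq> q \<times> U"
    proof
      fix z assume "z \<in> ?W"
      then obtain i where i: "i \<in> I" "fst ` \<Delta> i = q" "z \<in> \<Delta> i" by blast
      have "z \<in> UNIV \<times> U" using m1(3) i by blast
      moreover have "fst z \<in> q" using i by blast
      ultimately show "z \<in> q \<times> U" by (cases z) auto
    qed
  next
    have clW: "closed ?W"
      by (rule closed_locfin_union[where I=I]) (use cl m1(2) in auto)
    have sub: "interior q \<times> U \<subseteq> ?W"
    proof
      fix z assume z: "z \<in> interior q \<times> U"
      then obtain y u where yu: "z = (y,u)" "y \<in> interior q" "u \<in> U" by blast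
      then obtain j where j: "j \<in> I" "z \<in> \<Delta> j" using m1(3) by blast
      have yj: "y \<in> fst ` \<Delta> j" using j yu by force
      have "fst ` \<Delta> j = q"
      proof (rule ccontr)
        assume "fst ` \<Delta> j \<noteq> q"
        then have dis: "interior (fst ` \<Delta> j) \<inter> interior q = {}" using assms(4) i0 j by blast
        have "y \<in> closure (interior (fst ` \<Delta> j))"
          using pc j yj convex_closure_interior closure_subset by (metis subsetD)
        then have "interior q \<inter> interior (fst ` \<Delta> j) \<noteq> {}"
          using open_meets_closure[of "interior q" y] yu by auto
        with dis show False by blast
      qed
      then show "z \<in> ?W" using j by blast
    qed
    have "q \<times> U \<subseteq> closure (interior q) \<times> closure U"
    proof -
      have "q \<subseteq> closure (interior q)"
        using pc i0 convex_closure_interior[of q] closure_closed[of q] by (metis order_refl)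
      then show ?thesis using closure_subset[of U] by auto
    qed
    also have "\<dots> = closure (interior q \<times> U)" by (simp add: closure_Times)
    also have "\<dots> \<subseteq> ?W" using sub clW closure_minimal by blast
    finally show "q \<times> U \<subseteq> ?W" .
  qed
qed
end
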